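(* Let $d\ge1$ and let $g\colon\mathbb{R}^d\rightarrow[0,\infty)$ be measurable. Let $\beta>1$ and $\alpha>d(\beta-1)$. Then \[ \int_{\mathbb{R}^d} g(x)\,dx \ \leq \ C_{\alpha,\beta,d} \bigg(\int_{\mathbb{R}^d} g(x)^\beta\,dx\bigg)^{\frac{\alpha-d(\beta-1)}{\alpha\beta}} \bigg(\int_{\mathbb{R}^d} |x|^\alpha\,g(x)^\beta\,dx\bigg)^{\frac{d(\beta-1)}{\alpha\beta}}, \] where \[ C_{\alpha,\beta,d} = \bigg(\frac{\alpha}{d(\beta-1)}\bigg)^{1/\beta}\bigg(\frac{d(\beta-1)}{\alpha-d(\beta-1)}\bigg)^{\frac{\alpha-d(\beta-1)}{\alpha\beta}}\bigg(\frac{2\pi^{d/2}}{\Gamma(\frac{d}{2})}\frac{1}{\alpha}I_{\alpha,\beta,d}\bigg)^{\frac{\beta-1}{\beta}}, \qquad I_{\alpha,\beta,d} = \int_0^\infty\frac{s^{\frac{d}{\alpha}-1}}{(1+s)^{\frac{1}{\beta-1}}}\,ds = \frac{\Gamma\big(\frac{d}{\alpha}\big) \Gamma\big(\frac{1}{\beta-1} - \frac{d}{\alpha}\big)}{\Gamma\big(\frac{1}{\beta-1}\big)}. \]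
   Context: $\Gamma$ denotes the gamma function and $|\cdot|$ the Euclidean norm on $\mathbb R^d$. *)

theory Defs
  imports "HOL-Analysis.Analysis"
begin

text \<open>Real power of an extended nonnegative real, for positive exponents:
  \<infinity> powr p = \<infinity>, and otherwise the usual real power (0 powr p = 0).\<close>
definition ennreal_powr :: "ennreal \<Rightarrow> real \<Rightarrow> ennreal" where
  "ennreal_powr x p = (if x = \<infinity> then \<infinity> else ennreal (enn2real x powr p))"

definition I_const :: "real \<Rightarrow> real \<Rightarrow> real \<Rightarrow> real" where
  "I_const \<alpha> \<beta> d = (LBINT s=0..\<infinity>. s powr (d / \<alpha> - 1) / (1 + s) powr (1 / (\<beta> - 1)))"

definition C_const :: "real \<Rightarrow> real \<Rightarrow> real \<Rightarrow> real" where
  "C_const \<alpha> \<beta> d =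
     (\<alpha> / (d * (\<beta> - 1))) powr (1 / \<beta>)
   * (d * (\<beta> - 1) / (\<alpha> - d * (\<beta> - 1))) powr ((\<alpha> - d * (\<beta> - 1)) / (\<alpha> * \<beta>))
   * ((2 * pi powr (d / 2) / Gamma (d / 2)) * (1 / \<alpha>) * I_const \<alpha> \<beta> d) powr ((\<beta> - 1) / \<beta>)"

end

theory Submission
  imports Defs "HOL-Real_Asymp.Real_Asymp"
begin


lemma distr_radial:
  fixes c \<alpha> :: real
  assumes c: "c > 0" and \<alpha>: "\<alpha> > 0"
  shows "distr lborel borel (\<lambda>x::'a::euclidean_space. c * norm x powr \<alpha>)
       = density lborel (\<lambda>s. ennreal (indicator {0..} s * (unit_ball_vol DIM('a) * (DIM('a) / \<alpha>) * c powr (-(DIM('a) / \<alpha>))) * s powr (DIM('a) / \<alpha> - 1)))"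
    (is "?M = ?N")
proof (rule measure_eqI_generator_eq_countable[where E="range lessThan" and \<Omega>=UNIV and A="range (\<lambda>n::nat. {..<real n})"])
  define n where "n = DIM('a)"
  define m where "m = real n / \<alpha>"
  define V where "V = unit_ball_vol n"
  have m: "m > 0" using \<alpha> by (simp add: m_def n_def)
  have V: "V > 0" by (simp add: V_def)
  have n1: "n \<ge> 1" by (simp add: n_def)
  have meq: "emeasure ?M {..<t} = emeasure ?N {..<t}" for t :: real
  proof (cases "t > 0")
    case False
    have "emeasure ?M {..<t} = emeasure lborel ({x::'a. c * norm x powr \<alpha> < t})"
      by (subst emeasure_distr) (auto intro!: arg_cong2[where f=emeasure])
    also have "{x::'a. c * norm x powr \<alpha> < t} = {}"
      using False c by (auto simp: not_less intro!: order_trans[OF _ mult_nonneg_nonneg])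
    finally have 1: "emeasure ?M {..<t} = 0" by simp
    have "emeasure ?N {..<t} = (\<integral>\<^sup>+ s. ennreal (indicator {0..} s * (V * m * c powr -m) * s powr (m-1)) * indicator {..<t} s \<partial>lborel)"
      by (subst emeasure_density) (auto simp: V_def m_def n_def)
    also have "\<dots> = (\<integral>\<^sup>+ s. 0 \<partial>(lborel::real measure))"
      by (rule nn_integral_cong) (use False in \<open>auto simp: indicator_def\<close>)
    finally show ?thesis using 1 by simp
  next
    case True
    define R where "R = (t / c) powr (1 / \<alpha>)"
    have R: "R > 0" using True c by (simp add: R_def)
    have "{x::'a. c * norm x powr \<alpha> < t} = ball 0 R"
    proof -
      have "c * norm x powr \<alpha> < t \<longleftrightarrow> norm x < R" for x :: 'a
      proof -
        have "c * norm x powr \<alpha> < t \<longleftrightarrow> norm x powr \<alpha> < t / c" using c by (simp add: field_simps)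
        also have "\<dots> \<longleftrightarrow> norm x < R"
        proof -
          have RR: "R powr \<alpha> = t / c" using \<alpha> True c by (simp add: R_def powr_powr)
          show ?thesis
          proof
            assume "norm x powr \<alpha> < t / c"
            then show "norm x < R"
              using powr_mono2[of \<alpha> R "norm x"] \<alpha> R RR by (cases "norm x < R") auto
          next
            assume "norm x < R"
            then show "norm x powr \<alpha> < t / c" using powr_less_mono2[of \<alpha> "norm x" R] \<alpha> RR by simp
          qed
        qed
        finally show ?thesis .
      qed
      then show ?thesis by (auto simp: dist_norm)
    qed
    then have "emeasure ?M {..<t} = emeasure lborel (ball (0::'a) R)"
      by (subst emeasure_distr) (auto intro!: arg_cong2[where f=emeasure])
    also have "\<dots> = ennreal (V * R ^ n)" using R by (simp add: emeasure_ball V_def n_def)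
    also have "R ^ n = (t / c) powr m"
      using R True c by (simp add: R_def m_def powr_realpow[symmetric] powr_powr)
    finally have 1: "emeasure ?M {..<t} = ennreal (V * (t / c) powr m)" .
    have "emeasure ?N {..<t} = (\<integral>\<^sup>+ s. ennreal (V * m * c powr (-m)) * ennreal (s powr (m - 1) * indicator {0..t} s) \<partial>lborel)"
      by (subst emeasure_density) (auto intro!: nn_integral_cong_AE eventually_mono[OF AE_lborel_singleton[of t]]
           simp: indicator_def V_def m_def n_def ennreal_mult'[symmetric] mult_ac)
    also have "\<dots> = ennreal (V * m * c powr (-m)) * (\<integral>\<^sup>+ s. ennreal (s powr (m - 1)) * indicator {0..t} s \<partial>lborel)"
      by (subst nn_integral_cmult[symmetric]) (auto simp: indicator_def intro!: nn_integral_cong)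
    also have "(\<integral>\<^sup>+ s. ennreal (s powr (m - 1)) * indicator {0..t} s \<partial>lborel) = ennreal (t powr m / m)"
      using nn_integral_has_integral_lebesgue'[OF _ has_integral_powr_from_0[of "m - 1" t]] m True by simp
    also have "ennreal (V * m * c powr (-m)) * ennreal (t powr m / m) = ennreal (V * (t / c) powr m)"
      using m V c True by (simp add: ennreal_mult'[symmetric] powr_divide powr_minus field_simps)
    finally show ?thesis using 1 by simp
  qed
  show "Int_stable (range lessThan :: real set set)"
  proof (clarsimp simp: Int_stable_def)
    fix a b :: real
    have "{..<a} \<inter> {..<b} = {..<min a b}" by auto
    then show "{..<a} \<inter> {..<b} \<in> range lessThan" by blast
  qed
  show "range lessThan \<subseteq> Pow (UNIV :: real set)" by auto
  show "\<And>X. X \<in> range lessThan \<Longrightarrow> emeasure ?M X = emeasure ?N X" using meq by auto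
  show "sets ?M = sigma_sets UNIV (range lessThan)" "sets ?N = sigma_sets UNIV (range lessThan)"
    by (simp_all add: borel_Iio)
  show "range (\<lambda>n::nat. {..<real n}) \<subseteq> range lessThan" by auto
  show "\<Union> (range (\<lambda>n::nat. {..<real n})) = UNIV" by (auto intro: reals_Archimedean2)
  show "countable (range (\<lambda>n::nat. {..<real n}))" by auto
  have fin: "emeasure ?M {..<real k} \<noteq> \<infinity>" for k :: nat
    proof -
      have sub: "(\<lambda>x::'a. c * norm x powr \<alpha>) -` {..<real k} \<subseteq> cball 0 ((real k / c) powr (1 / \<alpha>))"
      proof clarsimp
        fix x :: 'a assume "c * norm x powr \<alpha> < real k"
        then have "norm x powr \<alpha> \<le> real k / c" using c by (simp add: field_simps)
        then have "(norm x powr \<alpha>) powr (1/\<alpha>) \<le> (real k / c) powr (1/\<alpha>)"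
          using \<alpha> by (intro powr_mono2) auto
        then show "norm x \<le> (real k / c) powr (1 / \<alpha>)" using \<alpha> by (simp add: powr_powr)
      qed
      have "emeasure ?M {..<real k} = emeasure lborel ((\<lambda>x::'a. c * norm x powr \<alpha>) -` {..<real k})"
        by (subst emeasure_distr) auto
      also have "\<dots> \<le> emeasure lborel (cball (0::'a) ((real k / c) powr (1/\<alpha>)))"
        by (rule emeasure_mono[OF sub]) simp
      also have "\<dots> < \<infinity>" by (simp add: emeasure_cball)
      finally show ?thesis by simp
    qed
  show "\<And>a. a \<in> range (\<lambda>n::nat. {..<real n}) \<Longrightarrow> emeasure ?M a \<noteq> \<infinity>"
    using fin by auto
qed




lemma fg_calc:
  fixes a q u :: real
  assumes "0 < u" "u < 1"
  shows "(u / (1 - u)) powr (a - 1) / (1 + u / (1 - u)) powr q * (1 / (1 - u)^2)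
       = u powr (a - 1) * (1 - u) powr (q - a - 1)"
proof -
  define w where "w = 1 - u"
  have w: "w > 0" using assms by (simp add: w_def)
  have e1: "1 + u / (1 - u) = 1 / w" using w by (simp add: w_def field_simps)
  have e2: "(u / w) powr (a - 1) = u powr (a - 1) / w powr (a - 1)"
    using w assms by (simp add: powr_divide)
  have e3: "(1 / w) powr q = 1 / w powr q"
    using w by (simp add: powr_divide)
  have e4: "w ^ 2 = w powr 2"
    using w by (simp add: powr_realpow)
  have e5: "w powr q / (w powr (a - 1) * w powr 2) = w powr (q - a - 1)"
  proof -
    have "w powr (a - 1) * w powr 2 = w powr (a + 1)" using powr_add[of w "a - 1" 2] by (simp add: algebra_simps)
    then show ?thesis using w by (simp add: powr_diff[symmetric] algebra_simps)
  qed
  have "(u / (1 - u)) powr (a - 1) / (1 + u / (1 - u)) powr q * (1 / (1 - u)^2)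
       = (u powr (a - 1) / w powr (a - 1)) / (1 / w powr q) * (1 / w powr 2)"
    unfolding e1 by (simp only: w_def[symmetric] e2 e3 e4)
  also have "\<dots> = u powr (a - 1) * (w powr q / (w powr (a - 1) * w powr 2))"
    using w by (simp add: field_simps)
  also have "\<dots> = u powr (a - 1) * w powr (q - a - 1)" by (simp only: e5)
  finally show ?thesis by (simp add: w_def)
qed
lemma tendsto_g1: "filterlim (\<lambda>u::real. u / (1 - u)) at_top (at_left 1)"
  by real_asymp

lemma tendsto_g0: "((\<lambda>u::real. u / (1 - u)) \<longlongrightarrow> 0) (at_right 0)"
  by real_asymp

lemma beta_improper:
  fixes a q :: real
  assumes a: "a > 0" and q: "q > a"
  shows "set_integrable lborel (einterval 0 \<infinity>) (\<lambda>s. s powr (a - 1) / (1 + s) powr q)"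
    and "(LBINT s=0..\<infinity>. s powr (a - 1) / (1 + s) powr q) = Beta a (q - a)"
proof -
  define f where "f = (\<lambda>s::real. s powr (a - 1) / (1 + s) powr q)"
  define g where "g = (\<lambda>u::real. u / (1 - u))"
  define g' where "g' = (\<lambda>u::real. 1 / (1 - u)^2)"
  define B where "B = (\<lambda>u::real. u powr (a - 1) * (1 - u) powr (q - a - 1))"
  have fg: "f (g u) * g' u = B u" if "0 < u" "u < 1" for u
    unfolding f_def g_def g'_def B_def using fg_calc[OF that, of a q] by simp
  have intB: "set_integrable lborel (einterval 0 1) B"
  proof -
    have "set_integrable lborel {0..1} B"
      using integrable_Beta[of a "q - a"] a q by (simp add: B_def)
    then show ?thesis
      by (rule set_integrable_subset) (auto simp: einterval_def)
  qed
  have intfg: "set_integrable lborel (einterval 0 1) (\<lambda>u. f (g u) * g' u)"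
    using intB by (subst set_integrable_cong[OF refl refl]) (auto simp: einterval_def fg)
  have deriv: "DERIV g x :> g' x" if "0 < x" "x < 1" for x
  proof -
    have x1: "1 - x \<noteq> 0" using that by simp
    show ?thesis unfolding g_def g'_def
    proof -
      have d: "DERIV (\<lambda>u. 1 - u) x :> -1"
        using DERIV_diff[OF DERIV_const[of 1] DERIV_ident, of x] by simp
      have "DERIV (\<lambda>u. u / (1 - u)) x :> (1 * (1 - x) - x * (-1)) / ((1 - x) * (1 - x))"
        by (rule DERIV_divide[OF DERIV_ident d]) (use x1 in simp)
      moreover have "(1 * (1 - x) - x * (-1)) / ((1 - x) * (1 - x)) = 1 / (1 - x)^2"
        by (simp add: power2_eq_square)
      ultimately show "DERIV (\<lambda>u. u / (1 - u)) x :> 1 / (1 - x)^2" by simp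
    qed
  qed
  have contf: "isCont f (g x)" if "0 < x" "x < 1" for x
  proof -
    have "g x > 0" using that by (simp add: g_def)
    then show ?thesis unfolding f_def by (auto intro!: continuous_intros)
  qed
  have contg': "isCont g' x" if "x < 1" for x
    using that unfolding g'_def by (auto intro!: continuous_intros)
  have fnn: "0 \<le> f (g x)" if "0 < x" "x < 1" for x
    unfolding f_def by simp
  have g'nn: "0 \<le> g' x" for x unfolding g'_def by simp
  note sub = interval_integral_substitution_nonneg[of 0 1 g g' f 0 \<infinity>]
  have lim0: "((ereal \<circ> g \<circ> real_of_ereal) \<longlongrightarrow> 0) (at_right 0)"
    using tendsto_g0 by (simp add: g_def zero_ereal_def ereal_tendsto_simps)
  have lim1: "((ereal \<circ> g \<circ> real_of_ereal) \<longlongrightarrow> \<infinity>) (at_left 1)"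
    using tendsto_g1 by (simp add: g_def one_ereal_def ereal_tendsto_simps)
  have conds: "(0::ereal) < 1" by simp
  have S: "set_integrable lborel (einterval 0 \<infinity>) f"
     "(LBINT x=0..\<infinity>. f x) = (LBINT x=0..1. f (g x) * g' x)"
  proof -
    have h1: "\<And>x. 0 < ereal x \<Longrightarrow> ereal x < 1 \<Longrightarrow> DERIV g x :> g' x"
      using deriv by (simp add: zero_ereal_def one_ereal_def)
    have h2: "\<And>x. 0 < ereal x \<Longrightarrow> ereal x < 1 \<Longrightarrow> isCont f (g x)"
      using contf by (simp add: zero_ereal_def one_ereal_def)
    have h3: "\<And>x. 0 < ereal x \<Longrightarrow> ereal x < 1 \<Longrightarrow> isCont g' x"
      using contg' by (simp add: zero_ereal_def one_ereal_def)
    have h4: "\<And>x. 0 < ereal x \<Longrightarrow> ereal x < 1 \<Longrightarrow> 0 \<le> f (g x)"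
      using fnn by (simp add: zero_ereal_def one_ereal_def)
    have h5: "\<And>x. 0 \<le> ereal x \<Longrightarrow> ereal x \<le> 1 \<Longrightarrow> 0 \<le> g' x"
      using g'nn by simp
    show "set_integrable lborel (einterval 0 \<infinity>) f"
      using sub(1)[OF conds h1 h2 h3 h4 h5 lim0 lim1 intfg] .
    show "(LBINT x=0..\<infinity>. f x) = (LBINT x=0..1. f (g x) * g' x)"
      using sub(2)[OF conds h1 h2 h3 h4 h5 lim0 lim1 intfg] .
  qed
  show "set_integrable lborel (einterval 0 \<infinity>) (\<lambda>s. s powr (a - 1) / (1 + s) powr q)"
    using S(1) by (simp add: f_def)
  have "(LBINT x=0..1. f (g x) * g' x) = (LBINT x=0..1. B x)"
    by (rule interval_integral_cong) (auto simp: fg einterval_def)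
  also have "\<dots> = (LBINT x=ereal 0..ereal 1. B x)" by (simp add: zero_ereal_def one_ereal_def)
  also have "\<dots> = (LBINT x:{0..1}. B x)" by (rule interval_integral_Icc) simp
  also have "\<dots> = integral {0..1} B"
    using integrable_Beta[of a "q - a"] a q
    by (intro set_borel_integral_eq_integral) (auto simp: B_def)
  also have "\<dots> = Beta a (q - a)"
    using has_integral_Beta_real[of a "q - a"] a q by (simp add: B_def has_integral_iff)
  finally show "(LBINT s=0..\<infinity>. s powr (a - 1) / (1 + s) powr q) = Beta a (q - a)"
    using S(2) by (simp add: f_def)
qed





lemma young_weighted:
  fixes \<beta> \<mu> w y :: real
  assumes \<beta>: "\<beta> > 1" and \<mu>: "\<mu> > 0" and w: "w > 0" and y: "y \<ge> 0"
  shows "y \<le> \<mu> * (y powr \<beta> * w) / \<beta> + \<mu> powr (-1/(\<beta>-1)) * w powr (-1/(\<beta>-1)) / (\<beta> / (\<beta> - 1))"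
proof -
  define p where "p = \<beta> / (\<beta> - 1)"
  have p: "p > 1" "1/\<beta> + 1/p = 1" using \<beta> by (auto simp: p_def field_simps)
  define A where "A = \<mu> powr (1/\<beta>) * y * w powr (1/\<beta>)"
  define B where "B = \<mu> powr (-1/\<beta>) * w powr (-1/\<beta>)"
  have A0: "A \<ge> 0" "B \<ge> 0" using y by (auto simp: A_def B_def)
  have AB: "A * B = y"
  proof -
    have "A * B = y * ((\<mu> powr (1/\<beta>) * \<mu> powr (-1/\<beta>)) * (w powr (1/\<beta>) * w powr (-1/\<beta>)))"
      by (simp add: A_def B_def mult_ac)
    also have "\<mu> powr (1/\<beta>) * \<mu> powr (-1/\<beta>) = 1" using \<mu> by (simp add: powr_add[symmetric])
    also have "w powr (1/\<beta>) * w powr (-1/\<beta>) = 1" using w by (simp add: powr_add[symmetric])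
    finally show ?thesis by simp
  qed
  have Ap: "A powr \<beta> = \<mu> * (y powr \<beta> * w)"
  proof -
    have "A powr \<beta> = (\<mu> powr (1/\<beta>)) powr \<beta> * y powr \<beta> * (w powr (1/\<beta>)) powr \<beta>"
      using y \<mu> w by (simp add: A_def powr_mult)
    also have "(\<mu> powr (1/\<beta>)) powr \<beta> = \<mu>" using \<beta> \<mu> by (simp add: powr_powr)
    also have "(w powr (1/\<beta>)) powr \<beta> = w" using \<beta> w by (simp add: powr_powr)
    finally show ?thesis by simp
  qed
  have Bp: "B powr p = \<mu> powr (-1/(\<beta>-1)) * w powr (-1/(\<beta>-1))"
  proof -
    have e: "-1/\<beta> * p = -1/(\<beta>-1)" using \<beta> by (simp add: p_def field_simps)
    have "B powr p = (\<mu> powr (-1/\<beta>)) powr p * (w powr (-1/\<beta>)) powr p"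
      using \<mu> w by (simp add: B_def powr_mult)
    also have "\<dots> = \<mu> powr (-1/(\<beta>-1)) * w powr (-1/(\<beta>-1))"
      by (simp only: powr_powr e)
    finally show ?thesis .
  qed
  have "A * B \<le> A powr \<beta> / \<beta> + B powr p / p"
    by (rule Youngs_inequality) (use \<beta> p A0 in auto)
  then show ?thesis using AB Ap Bp by (simp add: p_def)
qed

lemma holder_weighted:
  fixes M :: "'a measure" and g w :: "'a \<Rightarrow> real" and \<beta> P Q :: real
  assumes \<beta>: "\<beta> > 1"
    and gm: "g \<in> borel_measurable M" and wm: "w \<in> borel_measurable M"
    and g0: "\<And>x. g x \<ge> 0" and w0: "\<And>x. w x > 0"
    and P: "(\<integral>\<^sup>+ x. ennreal (g x powr \<beta> * w x) \<partial>M) = ennreal P" and P0: "P > 0"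
    and Q: "(\<integral>\<^sup>+ x. ennreal (w x powr (-1/(\<beta>-1))) \<partial>M) = ennreal Q" and Q0: "Q > 0"
  shows "(\<integral>\<^sup>+ x. ennreal (g x) \<partial>M) \<le> ennreal (P powr (1/\<beta>) * Q powr ((\<beta>-1)/\<beta>))"
proof -
  define \<theta> where "\<theta> = (\<beta>-1)/\<beta>"
  define \<mu> where "\<mu> = (Q / P) powr \<theta>"
  have \<mu>: "\<mu> > 0" using P0 Q0 by (simp add: \<mu>_def)
  define c1 where "c1 = \<mu> / \<beta>"
  define c2 where "c2 = \<mu> powr (-1/(\<beta>-1)) / (\<beta> / (\<beta> - 1))"
  have c: "c1 \<ge> 0" "c2 \<ge> 0" using \<mu> \<beta> by (auto simp: c1_def c2_def)
  have pw: "ennreal (g x) \<le> ennreal c1 * ennreal (g x powr \<beta> * w x) + ennreal c2 * ennreal (w x powr (-1/(\<beta>-1)))" for x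
  proof -
    have "g x \<le> c1 * (g x powr \<beta> * w x) + c2 * (w x powr (-1/(\<beta>-1)))"
      using young_weighted[OF \<beta> \<mu> w0[of x] g0[of x]] by (simp add: c1_def c2_def field_simps)
    then show ?thesis
      using c w0[of x] g0[of x] by (simp add: ennreal_mult'[symmetric] ennreal_plus[symmetric] del: ennreal_plus)
  qed
  have "(\<integral>\<^sup>+ x. ennreal (g x) \<partial>M) \<le> (\<integral>\<^sup>+ x. ennreal c1 * ennreal (g x powr \<beta> * w x) + ennreal c2 * ennreal (w x powr (-1/(\<beta>-1))) \<partial>M)"
    by (rule nn_integral_mono) (rule pw)
  also have "\<dots> = ennreal c1 * ennreal P + ennreal c2 * ennreal Q"
  proof -
    have m1: "(\<lambda>x. ennreal c1 * ennreal (g x powr \<beta> * w x)) \<in> borel_measurable M" using gm wm by measurable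
    have m2: "(\<lambda>x. ennreal c2 * ennreal (w x powr (-1/(\<beta>-1)))) \<in> borel_measurable M" using wm by measurable
    have "(\<integral>\<^sup>+ x. ennreal c1 * ennreal (g x powr \<beta> * w x) + ennreal c2 * ennreal (w x powr (-1/(\<beta>-1))) \<partial>M)
       = (\<integral>\<^sup>+ x. ennreal c1 * ennreal (g x powr \<beta> * w x) \<partial>M) + (\<integral>\<^sup>+ x. ennreal c2 * ennreal (w x powr (-1/(\<beta>-1))) \<partial>M)"
      by (rule nn_integral_add[OF m1 m2])
    also have "(\<integral>\<^sup>+ x. ennreal c1 * ennreal (g x powr \<beta> * w x) \<partial>M) = ennreal c1 * ennreal P"
      by (subst nn_integral_cmult) (use gm wm P in \<open>simp_all\<close>)
    also have "(\<integral>\<^sup>+ x. ennreal c2 * ennreal (w x powr (-1/(\<beta>-1))) \<partial>M) = ennreal c2 * ennreal Q"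
      by (subst nn_integral_cmult) (use wm Q in \<open>simp_all\<close>)
    finally show ?thesis .
  qed
  also have "\<dots> = ennreal (c1 * P + c2 * Q)"
    using c P0 Q0 by (simp add: ennreal_mult'[symmetric] ennreal_plus[symmetric] del: ennreal_plus)
  also have "c1 * P + c2 * Q = P powr (1/\<beta>) * Q powr ((\<beta>-1)/\<beta>)"
  proof -
    have th: "\<theta> = 1 - 1/\<beta>" using \<beta> by (simp add: \<theta>_def field_simps)
    have "\<mu> * P = Q powr \<theta> * P powr (1/\<beta>)"
    proof -
      have "\<mu> * P = Q powr \<theta> / P powr \<theta> * P powr 1" using P0 Q0 by (simp add: \<mu>_def powr_divide)
      also have "\<dots> = Q powr \<theta> * (P powr 1 / P powr \<theta>)" by simp
      also have "P powr 1 / P powr \<theta> = P powr (1/\<beta>)"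
        by (subst powr_diff[symmetric]) (simp add: th)
      finally show ?thesis .
    qed
    moreover have "\<mu> powr (-1/(\<beta>-1)) * Q = Q powr \<theta> * P powr (1/\<beta>)"
    proof -
      have e: "\<theta> * (-1/(\<beta>-1)) = -1/\<beta>" using \<beta> by (simp add: \<theta>_def field_simps)
      have "\<mu> powr (-1/(\<beta>-1)) = (Q/P) powr (\<theta> * (-1/(\<beta>-1)))" unfolding \<mu>_def by (rule powr_powr)
      also have "\<dots> = (Q/P) powr (-1/\<beta>)" by (simp only: e)
      also have "\<dots> = P powr (1/\<beta>) / Q powr (1/\<beta>)"
      proof -
        have m: "-1/\<beta> = -(1/\<beta>)" by simp
        have d: "(Q/P) powr (1/\<beta>) = Q powr (1/\<beta>) / P powr (1/\<beta>)"
          using P0 Q0 by (simp add: powr_divide)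
        show ?thesis unfolding m powr_minus d using P0 Q0 by (simp add: field_simps)
      qed
      finally have "\<mu> powr (-1/(\<beta>-1)) * Q = P powr (1/\<beta>) * (Q powr 1 / Q powr (1/\<beta>))"
        using Q0 by simp
      also have "Q powr 1 / Q powr (1/\<beta>) = Q powr \<theta>" by (subst powr_diff[symmetric]) (simp add: th)
      finally show ?thesis by (simp add: mult_ac)
    qed
    ultimately have "c1 * P + c2 * Q = (Q powr \<theta> * P powr (1/\<beta>)) * (1/\<beta> + (\<beta>-1)/\<beta>)"
      using \<beta> by (simp add: c1_def c2_def field_simps)
    also have "1/\<beta> + (\<beta>-1)/\<beta> = 1" using \<beta> by (simp add: field_simps)
    finally show ?thesis by (simp add: \<theta>_def mult_ac)
  qed
  finally show ?thesis .
qed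




lemma I_nn:
  fixes a q :: real
  assumes a: "a > 0" and q: "q > a"
  shows "(\<integral>\<^sup>+ s. ennreal (indicator {0..} s * s powr (a - 1) * (1 + s) powr (-q)) \<partial>lborel)
         = ennreal (LBINT s=0..\<infinity>. s powr (a - 1) / (1 + s) powr q)"
proof -
  define f where "f = (\<lambda>s::real. s powr (a - 1) / (1 + s) powr q)"
  have int: "set_integrable lborel (einterval 0 \<infinity>) f" using beta_improper(1)[OF a q] by (simp add: f_def)
  have e: "einterval 0 \<infinity> = {0::real<..}" by (auto simp: einterval_def)
  have "(\<integral>\<^sup>+ s. ennreal (indicator {0..} s * s powr (a - 1) * (1 + s) powr (-q)) \<partial>lborel)
      = (\<integral>\<^sup>+ s. ennreal (indicator (einterval 0 \<infinity>) s *\<^sub>R f s) \<partial>lborel)"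
    by (intro nn_integral_cong_AE eventually_mono[OF AE_lborel_singleton[of 0]])
       (auto simp: e f_def indicator_def powr_minus_divide)
  also have "\<dots> = ennreal (integral\<^sup>L lborel (\<lambda>s. indicator (einterval 0 \<infinity>) s *\<^sub>R f s))"
    using int unfolding set_integrable_def
    by (intro nn_integral_eq_integral) (auto simp: f_def indicator_def)
  also have "integral\<^sup>L lborel (\<lambda>s. indicator (einterval 0 \<infinity>) s *\<^sub>R f s) = (LBINT s=0..\<infinity>. f s)"
    by (simp add: interval_lebesgue_integral_def set_lebesgue_integral_def)
  finally show ?thesis by (simp add: f_def)
qed

lemma K_formula:
  fixes c \<alpha> q :: real
  assumes c: "c > 0" and \<alpha>: "\<alpha> > 0"
  shows "(\<integral>\<^sup>+ x. ennreal ((1 + c * norm (x::'a::euclidean_space) powr \<alpha>) powr (-q)) \<partial>lborel)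
       = ennreal (unit_ball_vol DIM('a) * (DIM('a) / \<alpha>) * c powr (-(DIM('a) / \<alpha>)))
         * (\<integral>\<^sup>+ s. ennreal (indicator {0..} s * s powr (DIM('a) / \<alpha> - 1) * (1 + s) powr (-q)) \<partial>lborel)"
proof -
  define k where "k = unit_ball_vol DIM('a) * (DIM('a) / \<alpha>) * c powr (-(DIM('a) / \<alpha>))"
  have k: "k \<ge> 0" using \<alpha> by (simp add: k_def)
  have "(\<integral>\<^sup>+ x. ennreal ((1 + c * norm (x::'a) powr \<alpha>) powr (-q)) \<partial>lborel)
      = (\<integral>\<^sup>+ s. ennreal ((1 + s) powr (-q)) \<partial>distr lborel borel (\<lambda>x::'a. c * norm x powr \<alpha>))"
    by (subst nn_integral_distr) auto
  also have "\<dots> = (\<integral>\<^sup>+ s. ennreal (indicator {0..} s * k * s powr (DIM('a) / \<alpha> - 1)) * ennreal ((1 + s) powr (-q)) \<partial>lborel)"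
    unfolding distr_radial[OF c \<alpha>, where 'a='a]
    by (subst nn_integral_density) (auto simp: k_def mult_ac)
  also have "\<dots> = (\<integral>\<^sup>+ s. ennreal k * ennreal (indicator {0..} s * s powr (DIM('a) / \<alpha> - 1) * (1 + s) powr (-q)) \<partial>lborel)"
    using k by (intro nn_integral_cong) (auto simp: indicator_def ennreal_mult'[symmetric] mult_ac)
  also have "\<dots> = ennreal k * (\<integral>\<^sup>+ s. ennreal (indicator {0..} s * s powr (DIM('a) / \<alpha> - 1) * (1 + s) powr (-q)) \<partial>lborel)"
    by (rule nn_integral_cmult) auto
  finally show ?thesis by (simp add: k_def)
qed




lemma alg:
  fixes a b \<kappa> \<beta> m t :: real
  assumes a: "a > 0" and b: "b > 0" and \<kappa>: "\<kappa> > 0" and \<beta>: "\<beta> > 1" and m: "m > 0"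
    and tdef: "t = m * (\<beta> - 1)" and t1: "t < 1"
  shows "(a + (t * a / ((1 - t) * b)) * b) powr (1/\<beta>) * (\<kappa> * (t * a / ((1 - t) * b)) powr (-m)) powr ((\<beta>-1)/\<beta>)
       = (1/t) powr (1/\<beta>) * (t/(1-t)) powr ((1-t)/\<beta>) * \<kappa> powr ((\<beta>-1)/\<beta>) * a powr ((1-t)/\<beta>) * b powr (t/\<beta>)"
    (is "?L = ?R")
proof -
  have t0: "t > 0" using m \<beta> by (simp add: tdef)
  have u: "1 - t > 0" using t1 by simp
  define l where "l = t * a / ((1 - t) * b)"
  have l: "l > 0" using t0 u a b by (simp add: l_def)
  have s: "a + l * b = a / (1 - t)" using u b t0 by (simp add: l_def field_simps)
  have L: "?L = (a / (1 - t)) powr (1/\<beta>) * (\<kappa> * l powr (-m)) powr ((\<beta>-1)/\<beta>)"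
    by (simp add: l_def[symmetric] s)
  have pos: "?L > 0" "?R > 0" using L a b u \<kappa> l t0 by auto
  have lnl: "ln l = ln t + ln a - ln (1 - t) - ln b"
    using t0 a u b by (simp add: l_def ln_div ln_mult)
  have lnL: "ln ?L = (1/\<beta>) * (ln a - ln (1 - t)) + ((\<beta>-1)/\<beta>) * (ln \<kappa> - m * ln l)"
    unfolding L using a u \<kappa> l \<beta>
    by (simp add: ln_mult ln_powr ln_div)
  have lnR: "ln ?R = (1/\<beta>) * (- ln t) + ((1-t)/\<beta>) * (ln t - ln (1 - t)) + ((\<beta>-1)/\<beta>) * ln \<kappa>
      + ((1-t)/\<beta>) * ln a + (t/\<beta>) * ln b"
    using a b u \<kappa> t0 \<beta> by (simp add: ln_mult ln_powr ln_div)
  have "ln ?L = ln ?R"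
    unfolding lnL lnR lnl using \<beta> by (simp add: tdef field_simps)
  then show ?thesis using pos by simp
qed




theorem lemma2p3:
  fixes g :: "'a::euclidean_space \<Rightarrow> real" and \<alpha> \<beta> :: real
  assumes g_meas: "g \<in> borel_measurable lebesgue"
    and g_nonneg: "\<And>x. g x \<ge> 0"
    and \<beta>_gt: "\<beta> > 1"
    and \<alpha>_gt: "\<alpha> > real DIM('a) * (\<beta> - 1)"
  shows "(\<integral>\<^sup>+ x. ennreal (g x) \<partial>lebesgue)
           \<le> ennreal (C_const \<alpha> \<beta> (real DIM('a)))
             * ennreal_powr (\<integral>\<^sup>+ x. ennreal (g x powr \<beta>) \<partial>lebesgue)
                 ((\<alpha> - real DIM('a) * (\<beta> - 1)) / (\<alpha> * \<beta>))
             * ennreal_powr (\<integral>\<^sup>+ x. ennreal (norm x powr \<alpha> * g x powr \<beta>) \<partial>lebesgue)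
                 (real DIM('a) * (\<beta> - 1) / (\<alpha> * \<beta>))
       \<and> I_const \<alpha> \<beta> (real DIM('a))
           = Gamma (real DIM('a) / \<alpha>) * Gamma (1 / (\<beta> - 1) - real DIM('a) / \<alpha>)
             / Gamma (1 / (\<beta> - 1))"
proof -
  define n where "n = real DIM('a)"
  define m where "m = n / \<alpha>"
  define q where "q = 1 / (\<beta> - 1)"
  define t where "t = m * (\<beta> - 1)"
  define I where "I = I_const \<alpha> \<beta> n"
  define V where "V = unit_ball_vol n"
  define \<kappa> where "\<kappa> = V * m * I"
  define e1 where "e1 = (\<alpha> - n * (\<beta> - 1)) / (\<alpha> * \<beta>)"
  define e2 where "e2 = n * (\<beta> - 1) / (\<alpha> * \<beta>)"
  define A where "A = (\<integral>\<^sup>+ x. ennreal (g x powr \<beta>) \<partial>lebesgue)"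
  define B where "B = (\<integral>\<^sup>+ x. ennreal (norm x powr \<alpha> * g x powr \<beta>) \<partial>lebesgue)"
  define C where "C = C_const \<alpha> \<beta> n"
  have n1: "n \<ge> 1" by (simp add: n_def)
  have \<alpha>0: "\<alpha> > 0" using \<alpha>_gt \<beta>_gt n1 unfolding n_def[symmetric]
    by (smt (verit) mult_pos_pos)
  have m0: "m > 0" using n1 \<alpha>0 by (simp add: m_def)
  have t0: "t > 0" using m0 \<beta>_gt by (simp add: t_def)
  have t1: "t < 1" using \<alpha>_gt \<alpha>0 unfolding t_def m_def n_def by (simp add: field_simps)
  have qm: "q > m"
  proof -
    have "m * (\<beta> - 1) < 1" using t1 by (simp add: t_def)
    then show ?thesis using \<beta>_gt by (simp add: q_def field_simps)
  qed
  have Ibeta: "I = Beta m (q - m)"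
    using beta_improper(2)[OF m0 qm] by (simp add: I_def I_const_def m_def q_def)
  have I0: "I > 0" using m0 qm by (simp add: Ibeta Beta_def Gamma_real_pos)
  have second: "I_const \<alpha> \<beta> (real DIM('a))
           = Gamma (real DIM('a) / \<alpha>) * Gamma (1 / (\<beta> - 1) - real DIM('a) / \<alpha>)
             / Gamma (1 / (\<beta> - 1))"
    using Ibeta by (simp add: I_def Beta_def m_def q_def n_def)
  have V0: "V > 0" using n1 by (simp add: V_def)
  have \<kappa>0: "\<kappa> > 0" using V0 m0 I0 by (simp add: \<kappa>_def)
  have Ceq: "C = (1/t) powr (1/\<beta>) * (t/(1-t)) powr ((1-t)/\<beta>) * \<kappa> powr ((\<beta>-1)/\<beta>)"
  proof -
    have "n / 2 \<notin> \<int>\<^sub>\<le>\<^sub>0" using n1 nonpos_Ints_nonpos[of "n/2"] by auto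
    then have g2: "Gamma (n / 2 + 1) = (n / 2) * Gamma (n / 2)" using Gamma_plus1[of "n/2"] by simp
    have "2 * pi powr (n / 2) / Gamma (n / 2) * (1 / \<alpha>) * I = \<kappa>"
    proof -
      have Vd: "V = pi powr (n / 2) / ((n / 2) * Gamma (n / 2))" by (simp add: V_def unit_ball_vol_def g2)
      have "Gamma (n / 2) > 0" using n1 by (intro Gamma_real_pos) simp
      then show ?thesis using n1 \<alpha>0 by (simp add: \<kappa>_def Vd m_def field_simps)
    qed
    moreover have "\<alpha> / (n * (\<beta> - 1)) = 1 / t" by (simp add: t_def m_def)
    moreover have "n * (\<beta> - 1) / (\<alpha> - n * (\<beta> - 1)) = t / (1 - t)"
    proof -
      have h: "1 - t = (\<alpha> - n * (\<beta> - 1)) / \<alpha>" using \<alpha>0 by (simp add: t_def m_def field_simps)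
      have h2: "\<alpha> - n * (\<beta> - 1) > 0" using \<alpha>_gt by (simp add: n_def)
      have "t / (1 - t) = (n * (\<beta> - 1) / \<alpha>) / ((\<alpha> - n * (\<beta> - 1)) / \<alpha>)"
        unfolding h by (simp add: t_def m_def)
      also have "\<dots> = n * (\<beta> - 1) / (\<alpha> - n * (\<beta> - 1))" using \<alpha>0 h2 by simp
      finally show ?thesis by simp
    qed
    moreover have "(\<alpha> - n * (\<beta> - 1)) / (\<alpha> * \<beta>) = (1 - t) / \<beta>"
      using \<alpha>0 \<beta>_gt by (simp add: t_def m_def field_simps)
    ultimately show ?thesis by (simp add: C_def C_const_def I_def)
  qed
  have C0: "C > 0" unfolding Ceq using t0 t1 \<kappa>0 by simp
  have e1eq: "e1 = (1 - t) / \<beta>" using \<alpha>0 \<beta>_gt by (simp add: e1_def t_def m_def field_simps)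
  have e2eq: "e2 = t / \<beta>" using \<alpha>0 \<beta>_gt by (simp add: e2_def t_def m_def field_simps)
  have e10: "e1 > 0" using t1 \<beta>_gt by (simp add: e1eq)
  have e20: "e2 > 0" using t0 \<beta>_gt by (simp add: e2eq)
  have gbm: "(\<lambda>x. g x powr \<beta>) \<in> borel_measurable lebesgue" using g_meas by measurable
  have nbb: "(\<lambda>x::'a. norm x powr \<alpha>) \<in> borel_measurable lborel" by simp
  have nbm: "(\<lambda>x::'a. norm x powr \<alpha>) \<in> borel_measurable lebesgue" using nbb by (rule measurable_completion)
  have ngbm: "(\<lambda>x. norm x powr \<alpha> * g x powr \<beta>) \<in> borel_measurable lebesgue" using gbm nbm by measurable
  have zero: "(\<integral>\<^sup>+ x. ennreal (g x) \<partial>lebesgue) \<le> X" if "AE x in lebesgue. g x = 0" for X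
  proof -
    have "(\<integral>\<^sup>+ x. ennreal (g x) \<partial>lebesgue) = (\<integral>\<^sup>+ x. 0 \<partial>(lebesgue :: 'a measure))"
      by (rule nn_integral_cong_AE) (use that in \<open>auto elim: eventually_mono\<close>)
    then show ?thesis by simp
  qed
  have gbm': "(\<lambda>x. ennreal (g x powr \<beta>)) \<in> borel_measurable lebesgue" using gbm by measurable
  have ngbm': "(\<lambda>x. ennreal (norm x powr \<alpha> * g x powr \<beta>)) \<in> borel_measurable lebesgue" using ngbm by measurable
  have main: "(\<integral>\<^sup>+ x. ennreal (g x) \<partial>lebesgue) \<le> ennreal C * ennreal_powr A e1 * ennreal_powr B e2"
  proof (cases "A = 0 \<or> B = 0")
    case True
    show ?thesis
    proof (rule zero)
      show "AE x in lebesgue. g x = 0"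
      proof (cases "A = 0")
        case True
        then have "AE x in lebesgue. ennreal (g x powr \<beta>) = 0"
          using nn_integral_0_iff_AE[OF gbm'] by (simp add: A_def)
        then show ?thesis
          by (rule eventually_mono) (use g_nonneg in \<open>auto simp: ennreal_eq_0_iff\<close>)
      next
        case False
        with True have "B = 0" by simp
        then have "AE x in lebesgue. ennreal (norm x powr \<alpha> * g x powr \<beta>) = 0"
          using nn_integral_0_iff_AE[OF ngbm'] by (simp add: B_def)
        moreover have "AE x in lebesgue. x \<noteq> (0::'a)"
          by (rule AE_completion) (rule AE_lborel_singleton)
        ultimately show ?thesis
        proof eventually_elim
          case (elim x)
          then have "norm x powr \<alpha> * g x powr \<beta> \<le> 0" by (simp add: ennreal_eq_0_iff)
          moreover have "norm x powr \<alpha> > 0" using elim by simp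
          ultimately have "g x powr \<beta> \<le> 0" by (simp add: mult_le_0_iff)
          then show "g x = 0" using g_nonneg[of x] by simp
        qed
      qed
    qed
  next
    case False
    then have A0: "A \<noteq> 0" and B0: "B \<noteq> 0" by auto
    show ?thesis
    proof (cases "A = \<infinity> \<or> B = \<infinity>")
      case True
      have pA: "ennreal_powr A e1 \<noteq> 0"
      proof (cases "A = \<infinity>")
        case False
        have "0 < A" using A0 by (simp add: zero_less_iff_neq_zero)
        moreover have "A < top" using False by (simp add: top.not_eq_extremum)
        ultimately have "enn2real A > 0" by (simp add: enn2real_positive_iff)
        then show ?thesis using False by (simp add: ennreal_powr_def)
      qed (simp add: ennreal_powr_def)
      have pB: "ennreal_powr B e2 \<noteq> 0"
      proof (cases "B = \<infinity>")
        case False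
        have "0 < B" using B0 by (simp add: zero_less_iff_neq_zero)
        moreover have "B < top" using False by (simp add: top.not_eq_extremum)
        ultimately have "enn2real B > 0" by (simp add: enn2real_positive_iff)
        then show ?thesis using False by (simp add: ennreal_powr_def)
      qed (simp add: ennreal_powr_def)
      have Cn: "ennreal C \<noteq> 0" using C0 by simp
      have "ennreal C * ennreal_powr A e1 * ennreal_powr B e2 = \<infinity>"
      proof (cases "A = \<infinity>")
        case True
        then have "ennreal_powr A e1 = \<infinity>" by (simp add: ennreal_powr_def)
        then show ?thesis using Cn pB by (simp add: ennreal_mult_eq_top_iff)
      next
        case False
        then have "B = \<infinity>" using \<open>A = \<infinity> \<or> B = \<infinity>\<close> by simp
        then have "ennreal_powr B e2 = \<infinity>" by (simp add: ennreal_powr_def)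
        moreover have "ennreal C * ennreal_powr A e1 \<noteq> 0" using Cn pA by simp
        ultimately show ?thesis by (simp add: ennreal_mult_eq_top_iff)
      qed
      then show ?thesis by simp
    next
      case False
      then have Af: "A \<noteq> \<infinity>" and Bf: "B \<noteq> \<infinity>" by auto
      define a where "a = enn2real A"
      define b where "b = enn2real B"
      have Aa: "A = ennreal a" using Af unfolding a_def by (simp add: less_top ennreal_enn2real)
      have Bb: "B = ennreal b" using Bf unfolding b_def by (simp add: less_top ennreal_enn2real)
      have a0: "a > 0"
      proof -
        have "0 < A" using A0 by (simp add: zero_less_iff_neq_zero)
        have "A < top" using Af by (simp add: top.not_eq_extremum)
        then show ?thesis using \<open>0 < A\<close> by (simp add: a_def enn2real_positive_iff)
      qed
      have b0: "b > 0"
      proof -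
        have "0 < B" using B0 by (simp add: zero_less_iff_neq_zero)
        have "B < top" using Bf by (simp add: top.not_eq_extremum)
        then show ?thesis using \<open>0 < B\<close> by (simp add: b_def enn2real_positive_iff)
      qed
      define l where "l = t * a / ((1 - t) * b)"
      have l0: "l > 0" using t0 t1 a0 b0 by (simp add: l_def)
      define w where "w = (\<lambda>x::'a. 1 + l * norm x powr \<alpha>)"
      have w0: "\<And>x. w x > 0" using l0 by (simp add: w_def add_pos_nonneg)
      have wbm: "w \<in> borel_measurable lebesgue" unfolding w_def using nbm by measurable
      have P: "(\<integral>\<^sup>+ x. ennreal (g x powr \<beta> * w x) \<partial>lebesgue) = ennreal (a + l * b)"
      proof -
        have pw: "ennreal (g x powr \<beta> * w x) = ennreal (g x powr \<beta>) + ennreal l * ennreal (norm x powr \<alpha> * g x powr \<beta>)" for x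
        proof -
          have "g x powr \<beta> * w x = g x powr \<beta> + l * (norm x powr \<alpha> * g x powr \<beta>)"
            by (simp add: w_def algebra_simps)
          moreover have "ennreal (g x powr \<beta> + l * (norm x powr \<alpha> * g x powr \<beta>))
              = ennreal (g x powr \<beta>) + ennreal (l * (norm x powr \<alpha> * g x powr \<beta>))"
            using l0 by (intro ennreal_plus) auto
          moreover have "ennreal (l * (norm x powr \<alpha> * g x powr \<beta>)) = ennreal l * ennreal (norm x powr \<alpha> * g x powr \<beta>)"
            using l0 by (intro ennreal_mult) auto
          ultimately show ?thesis by simp
        qed
        have "(\<integral>\<^sup>+ x. ennreal (g x powr \<beta> * w x) \<partial>lebesgue)
            = (\<integral>\<^sup>+ x. ennreal (g x powr \<beta>) + ennreal l * ennreal (norm x powr \<alpha> * g x powr \<beta>) \<partial>lebesgue)"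
          by (simp only: pw)
        also have "\<dots> = A + (\<integral>\<^sup>+ x. ennreal l * ennreal (norm x powr \<alpha> * g x powr \<beta>) \<partial>lebesgue)"
          unfolding A_def by (rule nn_integral_add) (use gbm' ngbm' in auto)
        also have "(\<integral>\<^sup>+ x. ennreal l * ennreal (norm x powr \<alpha> * g x powr \<beta>) \<partial>lebesgue) = ennreal l * B"
          unfolding B_def by (rule nn_integral_cmult) (rule ngbm')
        also have "A + ennreal l * B = ennreal (a + l * b)"
        proof -
          have "ennreal (a + l * b) = ennreal a + ennreal (l * b)" using l0 a0 b0 by (intro ennreal_plus) auto
          also have "ennreal (l * b) = ennreal l * ennreal b" using l0 b0 by (intro ennreal_mult) auto
          finally show ?thesis by (simp add: Aa Bb)
        qed
        finally show ?thesis .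
      qed
      have Q: "(\<integral>\<^sup>+ x. ennreal (w x powr (-1/(\<beta>-1))) \<partial>lebesgue) = ennreal (\<kappa> * l powr (-m))"
      proof -
        have wbb: "(\<lambda>x. ennreal (w x powr (-1/(\<beta>-1)))) \<in> borel_measurable lborel"
          unfolding w_def by simp
        have "(\<integral>\<^sup>+ x. ennreal (w x powr (-1/(\<beta>-1))) \<partial>lebesgue) = (\<integral>\<^sup>+ x. ennreal (w x powr (-1/(\<beta>-1))) \<partial>lborel)"
          by (rule nn_integral_completion)
        also have "\<dots> = (\<integral>\<^sup>+ x. ennreal ((1 + l * norm (x::'a) powr \<alpha>) powr (-q)) \<partial>lborel)"
          by (simp add: w_def q_def)
        also have "\<dots> = ennreal (V * m * l powr (-m))
            * (\<integral>\<^sup>+ s. ennreal (indicator {0..} s * s powr (m - 1) * (1 + s) powr (-q)) \<partial>lborel)"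
          using K_formula[OF l0 \<alpha>0, of q, where 'a='a] by (simp add: V_def m_def n_def)
        also have "(\<integral>\<^sup>+ s. ennreal (indicator {0..} s * s powr (m - 1) * (1 + s) powr (-q)) \<partial>lborel) = ennreal I"
          using I_nn[OF m0 qm] by (simp add: I_def I_const_def m_def q_def)
        finally show ?thesis using V0 m0 l0 I0 by (simp add: \<kappa>_def ennreal_mult mult_ac)
      qed
      have "(\<integral>\<^sup>+ x. ennreal (g x) \<partial>lebesgue) \<le> ennreal ((a + l * b) powr (1/\<beta>) * (\<kappa> * l powr (-m)) powr ((\<beta>-1)/\<beta>))"
        by (rule holder_weighted[OF \<beta>_gt g_meas wbm g_nonneg w0 P _ Q])
           (use a0 b0 l0 \<kappa>0 in \<open>simp_all add: add_pos_pos\<close>)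
      also have "(a + l * b) powr (1/\<beta>) * (\<kappa> * l powr (-m)) powr ((\<beta>-1)/\<beta>) = C * a powr e1 * b powr e2"
        unfolding l_def Ceq e1eq e2eq by (rule alg[OF a0 b0 \<kappa>0 \<beta>_gt m0 t_def t1])
      also have "ennreal (C * a powr e1 * b powr e2) = ennreal C * ennreal_powr A e1 * ennreal_powr B e2"
      proof -
        have "ennreal_powr A e1 = ennreal (a powr e1)" using Af by (simp add: ennreal_powr_def a_def)
        moreover have "ennreal_powr B e2 = ennreal (b powr e2)" using Bf by (simp add: ennreal_powr_def b_def)
        ultimately show ?thesis using C0 by (simp add: ennreal_mult)
      qed
      finally show ?thesis .
    qed
  qed
  show ?thesis using main second
    by (simp add: C_def A_def B_def e1_def e2_def n_def)
qed


end
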